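(* Let $t>0$ and $k\ge 1$ be constants, and let $p_0,p_1,p_2,p_3$ be real numbers with $0<p_i<1$ and $\sum_{i=0}^{3}p_i=1$. Define $T(n,r)$ for real $n\ge 0$ and integers $r\ge 0$ by $$T(n,r)=\begin{cases}1 & \text{if } n\le t k^r,\\ 1+\sum_{i=0}^{3} T\big(p_i(n-tk^r),\,r+1\big) & \text{if } n> t k^r.\end{cases}$$ Then, as $N\to\infty$, $T(N,0)\in\Theta(N^s)$ for some real number $s$ with $0<s\le 1$.
   Context: $T(N,0)$ is the asymptotic space (number of counters) used by a DN-tree with parameters $k$ and $t$ after recording $N$ extent accesses: a tree vertex at level $r$ saturates at threshold $tk^r$, after which further accesses are distributed among its four children with probabilities $p_0,\dots,p_3$. The parameters $t,k,p_i$ are fixed as $N\to\infty$. *)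

theory Defs
  imports "HOL-Library.Landau_Symbols"
begin

end

theory Submission
  imports Defs
begin

lemma subadd_powr:
  fixes x s :: real
  assumes "0 < s" "s \<le> 1" "1 \<le> x"
  shows "x powr s \<le> (x - 1) powr s + 1"
proof (cases "x = 1")
  case True then show ?thesis by simp
next
  case False
  hence a: "x - 1 > 0" using assms by simp
  have x0: "x > 0" using assms by simp
  have "(x-1) powr (1 + (s-1)) = (x-1) powr 1 * (x-1) powr (s-1)" by (rule powr_add)
  hence "(x-1) powr s = (x-1) * (x-1) powr (s-1)" using a by simp
  also have "\<dots> \<ge> (x-1) * x powr (s-1)"
    using powr_mono2'[of "s-1" "x-1" x] a assms by (intro mult_left_mono) auto
  finally have 1: "(x-1) * x powr (s-1) \<le> (x-1) powr s" .
  have 2: "x powr (s-1) \<le> 1"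
    using powr_mono2'[of "s-1" 1 x] assms by auto
  have "x powr (1 + (s-1)) = x powr 1 * x powr (s-1)" by (rule powr_add)
  hence "x powr s = (x-1) * x powr (s-1) + x powr (s-1)"
    using x0 by (simp add: algebra_simps)
  also have "\<dots> \<le> (x-1) powr s + 1" using 1 2 by linarith
  finally show ?thesis .
qed

locale dn =
  fixes t k :: real and p :: "nat \<Rightarrow> real" and T :: "real \<Rightarrow> nat \<Rightarrow> real"
  assumes t_pos: "t > 0"
    and k_ge: "k \<ge> 1"
    and p_bounds: "\<And>i. i < 4 \<Longrightarrow> 0 < p i \<and> p i < 1"
    and p_sum: "(\<Sum>i<4. p i) = 1"
    and T_rec: "\<And>n r. n \<ge> 0 \<Longrightarrow>
       T n r = (if n \<le> t * k ^ r then 1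
                else 1 + (\<Sum>i<4. T (p i * (n - t * k ^ r)) (Suc r)))"
begin

definition q :: "nat \<Rightarrow> real" where "q i = p i / k"

lemma q_pos: "i < 4 \<Longrightarrow> 0 < q i"
  using p_bounds[of i] k_ge by (simp add: q_def)

lemma q_lt1: "i < 4 \<Longrightarrow> q i < 1"
  using p_bounds[of i] k_ge by (simp add: q_def)

lemma tk_pos: "0 < t * k ^ r"
  using t_pos k_ge by simp

lemma T_base: "0 \<le> n \<Longrightarrow> n / (t * k ^ r) \<le> 1 \<Longrightarrow> T n r = 1"
  using T_rec[of n r] tk_pos[of r] by (simp add: divide_le_eq)

lemma T_step: "0 \<le> n \<Longrightarrow> n / (t * k ^ r) > 1 \<Longrightarrow>
   T n r = 1 + (\<Sum>i<4. T (p i * (n - t * k ^ r)) (Suc r))"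
  using T_rec[of n r] tk_pos[of r] by (simp add: less_divide_eq)

lemma child_nonneg: "0 \<le> n \<Longrightarrow> n / (t * k ^ r) > 1 \<Longrightarrow> i < 4 \<Longrightarrow> 0 \<le> p i * (n - t * k ^ r)"
  using tk_pos[of r] p_bounds[of i] by (simp add: less_divide_eq)

lemma child_m: "p i * (n - t * k ^ r) / (t * k ^ Suc r) = q i * (n / (t * k ^ r) - 1)"
  using t_pos k_ge by (simp add: q_def field_simps)

lemma ind_aux:
  assumes base: "\<And>n r. 0 \<le> n \<Longrightarrow> n/(t*k^r) \<le> 1 \<Longrightarrow> P n r"
    and step: "\<And>n r. 0 \<le> n \<Longrightarrow> n/(t*k^r) > 1 \<Longrightarrow> (\<And>i. i<4 \<Longrightarrow> P (p i*(n - t*k^r)) (Suc r)) \<Longrightarrow> P n r"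
  shows "\<forall>n r. 0 \<le> n \<longrightarrow> n/(t*k^r) \<le> real N \<longrightarrow> P n r"
proof (induction N)
  case 0
  then show ?case using base by auto
next
  case (Suc N)
  show ?case
  proof (intro allI impI)
    fix n r assume n: "0 \<le> n" and mN: "n/(t*k^r) \<le> real (Suc N)"
    show "P n r"
    proof (cases "n/(t*k^r) \<le> 1")
      case True then show ?thesis using base n by auto
    next
      case False
      hence m1: "n/(t*k^r) > 1" by simp
      show ?thesis
      proof (rule step[OF n m1])
        fix i :: nat assume i: "i < 4"
        have c0: "0 \<le> p i*(n - t*k^r)" using child_nonneg[OF n m1 i] .
        have "q i * (n/(t*k^r) - 1) \<le> 1 * (n/(t*k^r) - 1)"
          using q_lt1[OF i] m1 by (intro mult_right_mono) auto
        hence "p i*(n - t*k^r) / (t*k^Suc r) \<le> real N"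
          using mN unfolding child_m by simp
        then show "P (p i*(n - t*k^r)) (Suc r)" using Suc.IH c0 by blast
      qed
    qed
  qed
qed

lemma ind:
  assumes base: "\<And>n r. 0 \<le> n \<Longrightarrow> n/(t*k^r) \<le> 1 \<Longrightarrow> P n r"
    and step: "\<And>n r. 0 \<le> n \<Longrightarrow> n/(t*k^r) > 1 \<Longrightarrow> (\<And>i. i<4 \<Longrightarrow> P (p i*(n - t*k^r)) (Suc r)) \<Longrightarrow> P n r"
    and n: "0 \<le> n"
  shows "P n r"
proof -
  have "n/(t*k^r) \<le> real (nat \<lceil>n/(t*k^r)\<rceil>)" by linarith
  then show ?thesis using ind_aux[of P "nat \<lceil>n/(t*k^r)\<rceil>", OF base step] n by blast
qed

lemma crude:
  assumes n: "0 \<le> n" shows "T n r \<le> 5 powr (n/(t*k^r))"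
proof (rule ind[where P="\<lambda>n r. T n r \<le> 5 powr (n/(t*k^r))", OF _ _ n])
  fix n r assume n: "0 \<le> (n::real)" and m: "n/(t*k^r) \<le> 1"
  have "0 \<le> n/(t*k^r)" using n tk_pos[of r] by simp
  then show "T n r \<le> 5 powr (n/(t*k^r))" using T_base[OF n m] ge_one_powr_ge_zero by simp
next
  fix n r assume n: "0 \<le> (n::real)" and m: "n/(t*k^r) > 1"
    and IH: "\<And>i. i<4 \<Longrightarrow> T (p i*(n - t*k^r)) (Suc r) \<le> 5 powr (p i*(n - t*k^r)/(t*k^Suc r))"
  define m where "m = n/(t*k^r)"
  have "T n r = 1 + (\<Sum>i<4. T (p i * (n - t * k ^ r)) (Suc r))" using T_step[OF n m] .
  also have "\<dots> \<le> 1 + (\<Sum>i<(4::nat). 5 powr (m - 1))"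
  proof -
    have "T (p i * (n - t * k ^ r)) (Suc r) \<le> 5 powr (m - 1)" if i: "i < 4" for i
    proof -
      have "q i * (m - 1) \<le> 1 * (m - 1)"
        using q_lt1[OF i] m by (intro mult_right_mono) (auto simp: m_def)
      hence "5 powr (q i * (m - 1)) \<le> 5 powr (m - 1)" by simp
      then show ?thesis using IH[OF i] unfolding child_m m_def by linarith
    qed
    then show ?thesis by (intro add_left_mono sum_mono) auto
  qed
  also have "\<dots> = 1 + 4 * 5 powr (m - 1)" by simp
  also have "\<dots> \<le> 5 * 5 powr (m - 1)"
    using ge_one_powr_ge_zero[of 5 "m - 1"] m by (simp add: m_def)
  also have "\<dots> = 5 powr m"
    using powr_add[of 5 1 "m - 1"] by simp
  finally show "T n r \<le> 5 powr (n/(t*k^r))" by (simp add: m_def)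
qed

lemma lower:
  assumes s: "0 < s" "s \<le> 1" "(\<Sum>i<4. q i powr s) = 1" and n: "0 \<le> n"
  shows "(n/(t*k^r)) powr s \<le> T n r"
proof (rule ind[where P="\<lambda>n r. (n/(t*k^r)) powr s \<le> T n r", OF _ _ n])
  fix n r assume n: "0 \<le> (n::real)" and m: "n/(t*k^r) \<le> 1"
  have "0 \<le> n/(t*k^r)" using n tk_pos[of r] by simp
  hence "(n/(t*k^r)) powr s \<le> 1 powr s" using m s by (intro powr_mono2) auto
  then show "(n/(t*k^r)) powr s \<le> T n r" using T_base[OF n m] by simp
next
  fix n r assume n: "0 \<le> (n::real)" and m: "n/(t*k^r) > 1"
    and IH: "\<And>i. i<4 \<Longrightarrow> (p i*(n - t*k^r)/(t*k^Suc r)) powr s \<le> T (p i*(n - t*k^r)) (Suc r)"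
  define m where "m = n/(t*k^r)"
  have "m powr s \<le> (m - 1) powr s + 1" using subadd_powr[of s m] s m by (simp add: m_def)
  also have "(m - 1) powr s = (\<Sum>i<4. q i powr s) * (m - 1) powr s" using s by simp
  also have "\<dots> = (\<Sum>i<4. (q i * (m - 1)) powr s)"
    unfolding sum_distrib_right
    using q_pos m by (intro sum.cong refl) (simp add: powr_mult m_def)
  also have "\<dots> \<le> (\<Sum>i<4. T (p i * (n - t * k ^ r)) (Suc r))"
    using IH unfolding child_m m_def by (intro sum_mono) auto
  also have "\<dots> + 1 = T n r" using T_step[OF n m] by simp
  finally show "(n/(t*k^r)) powr s \<le> T n r" by (simp add: m_def)
qed

lemma upper:
  assumes s: "0 < s" "s \<le> 1" "(\<Sum>i<4. q i powr s) = 1" and n: "0 \<le> n"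
  defines "M \<equiv> 1 + (\<Sum>i<4. 1 / q i)"
  defines "C \<equiv> 5 powr M + 1"
  shows "1 \<le> n/(t*k^r) \<longrightarrow> T n r \<le> C * (n/(t*k^r)) powr s - 1"
proof (rule ind[where P="\<lambda>n r. 1 \<le> n/(t*k^r) \<longrightarrow> T n r \<le> C * (n/(t*k^r)) powr s - 1", OF _ _ n])
  fix n r assume n: "0 \<le> (n::real)" and m: "n/(t*k^r) \<le> 1"
  show "1 \<le> n/(t*k^r) \<longrightarrow> T n r \<le> C * (n/(t*k^r)) powr s - 1"
  proof
    assume "1 \<le> n/(t*k^r)"
    hence eq: "n/(t*k^r) = 1" using m by linarith
    have A: "(n/(t*k^r)) powr s = 1" unfolding eq by simp have "0 \<le> (\<Sum>i<4. 1 / q i)"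
      by (intro sum_nonneg) (simp add: less_imp_le q_pos)
    hence M1: "1 \<le> 5 powr M" unfolding M_def
      by (intro ge_one_powr_ge_zero) auto
    have B: "T n r = 1" using T_base[OF n m] .
    show "T n r \<le> C * (n/(t*k^r)) powr s - 1" unfolding A B C_def using M1 by simp
  qed
next
  fix n r assume n: "0 \<le> (n::real)" and m: "n/(t*k^r) > 1"
    and IH: "\<And>i. i<4 \<Longrightarrow> 1 \<le> p i*(n - t*k^r)/(t*k^Suc r) \<longrightarrow>
        T (p i*(n - t*k^r)) (Suc r) \<le> C * (p i*(n - t*k^r)/(t*k^Suc r)) powr s - 1"
  define m where "m = n/(t*k^r)"
  have m1: "m > 1" using m by (simp add: m_def)
  have ms: "1 \<le> m powr s" using m1 s by (intro ge_one_powr_ge_zero) auto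
  have "T n r \<le> C * m powr s - 1"
  proof (cases "m \<le> M")
    case True
    have "T n r \<le> 5 powr m" using crude[OF n] by (simp add: m_def)
    also have "\<dots> \<le> 5 powr M" using True by simp
    also have "\<dots> = C * 1 - 1" by (simp add: C_def)
    also have "\<dots> \<le> C * m powr s - 1" using ms by (intro diff_right_mono mult_left_mono) (auto simp: C_def)
    finally show ?thesis .
  next
    case False
    have ch: "T (p i * (n - t * k ^ r)) (Suc r) \<le> C * (q i * (m - 1)) powr s - 1" if i: "i < 4" for i
    proof -
      have "1 / q i \<le> (\<Sum>j<4. 1 / q j)"
        using i q_pos by (intro member_le_sum) (auto intro: less_imp_le)
      hence "1 / q i \<le> m - 1" using False by (simp add: M_def)
      hence "1 \<le> q i * (m - 1)" using q_pos[OF i] by (simp add: divide_le_eq mult.commute)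
      then show ?thesis using IH[OF i] unfolding child_m m_def by simp
    qed
    have "T n r = 1 + (\<Sum>i<4. T (p i * (n - t * k ^ r)) (Suc r))" using T_step[OF n m] .
    also have "\<dots> \<le> 1 + (\<Sum>i<(4::nat). C * (q i * (m - 1)) powr s - 1)"
      using ch by (intro add_left_mono sum_mono) auto
    also have "(\<Sum>i<(4::nat). C * (q i * (m - 1)) powr s - 1) = C * ((\<Sum>i<4. q i powr s) * (m - 1) powr s) - 4"
      unfolding sum_subtractf sum_distrib_left sum_distrib_right
      using q_pos m1 by (simp add: powr_mult)
    also have "1 + (C * ((\<Sum>i<4. q i powr s) * (m - 1) powr s) - 4) = C * (m - 1) powr s - 3"
      using s by simp
    also have "\<dots> \<le> C * m powr s - 1"
    proof -
      have "(m - 1) powr s \<le> m powr s" using m1 s by (intro powr_mono2) auto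
      moreover have "C \<ge> 0" by (simp add: C_def add_nonneg_nonneg)
      ultimately show ?thesis by (smt (verit) mult_left_mono)
    qed
    finally show ?thesis .
  qed
  then show "1 \<le> n/(t*k^r) \<longrightarrow> T n r \<le> C * (n/(t*k^r)) powr s - 1" by (simp add: m_def)
qed

lemma exists_s: "\<exists>s. 0 < s \<and> s \<le> 1 \<and> (\<Sum>i<4. q i powr s) = 1"
proof -
  define f where "f = (\<lambda>s. \<Sum>i<4. q i powr s)"
  have "f 0 = (\<Sum>i<(4::nat). 1)" unfolding f_def
    by (intro sum.cong refl) (simp add: q_pos less_imp_neq[symmetric])
  hence f0: "f 0 = 4" by simp
  have "f 1 = (\<Sum>i<4. p i / k)" unfolding f_def
    by (intro sum.cong refl) (simp add: q_pos less_imp_le q_def[symmetric])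
  hence "f 1 = (\<Sum>i<4. p i) / k" by (simp add: sum_divide_distrib)
  hence f1: "f 1 \<le> 1" using p_sum k_ge by simp
  have "\<exists>x. 0 \<le> x \<and> x \<le> 1 \<and> f x = 1"
  proof (rule IVT2)
    show "f 1 \<le> 1" "1 \<le> f 0" "(0::real) \<le> 1" using f0 f1 by auto
    show "\<forall>x. 0 \<le> x \<and> x \<le> 1 \<longrightarrow> isCont f x"
      unfolding f_def using q_pos by (auto intro!: continuous_intros simp: less_imp_neq[symmetric])
  qed
  then obtain x where "0 \<le> x" "x \<le> 1" "f x = 1" by blast
  moreover have "x \<noteq> 0" using f0 \<open>f x = 1\<close> by auto
  ultimately have "0 < x" "x \<le> 1" "(\<Sum>i<4. q i powr x) = 1" unfolding f_def by auto
  then show ?thesis by blast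
qed

end

theorem corollary1:
  fixes t k :: real and p :: "nat \<Rightarrow> real" and T :: "real \<Rightarrow> nat \<Rightarrow> real"
  assumes t_pos: "t > 0"
    and k_ge: "k \<ge> 1"
    and p_bounds: "\<And>i. i < 4 \<Longrightarrow> 0 < p i \<and> p i < 1"
    and p_sum: "(\<Sum>i<4. p i) = 1"
    and T_rec: "\<And>n r. n \<ge> 0 \<Longrightarrow>
       T n r = (if n \<le> t * k ^ r then 1
                else 1 + (\<Sum>i<4. T (p i * (n - t * k ^ r)) (Suc r)))"
  shows "\<exists>s::real. 0 < s \<and> s \<le> 1 \<and> (\<lambda>N. T N 0) \<in> \<Theta>(\<lambda>N. N powr s)"
proof -
  interpret dn t k p T using assms by unfold_locales
  obtain s where s: "0 < s" "s \<le> 1" "(\<Sum>i<4. q i powr s) = 1" using exists_s by blast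
  define M where "M = 1 + (\<Sum>i<4. 1 / q i)"
  define C where "C = 5 powr M + 1"
  have C0: "C > 0" unfolding C_def by (simp add: add_nonneg_pos)
  have tp: "t powr s > 0" using t_pos by simp
  have ev: "eventually (\<lambda>N. (1 / t powr s) * norm (N powr s) \<le> norm (T N 0) \<and>
             norm (T N 0) \<le> (C / t powr s) * norm (N powr s)) at_top"
    using eventually_ge_at_top[of t]
  proof eventually_elim
    case (elim N)
    have N0: "0 \<le> N" using elim t_pos by simp
    have eq: "(N / (t * k ^ 0)) powr s = N powr s / t powr s"
      using N0 t_pos by (simp add: powr_divide)
    have lo: "N powr s / t powr s \<le> T N 0" using lower[OF s N0, of 0] eq by simp
    have "1 \<le> N / (t * k ^ 0)" using elim t_pos by simp
    hence "T N 0 \<le> C * (N powr s / t powr s) - 1"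
      using upper[OF s N0, of 0] eq unfolding M_def C_def by simp
    hence hi: "T N 0 \<le> C * (N powr s / t powr s)" by simp
    have Tn: "0 \<le> T N 0" using lo N0 tp by (smt (verit) divide_nonneg_pos powr_ge_zero)
    show ?case using lo hi Tn N0 by simp
  qed
  have "(\<lambda>N. T N 0) \<in> \<Theta>(\<lambda>N. N powr s)"
    by (rule bigthetaI'[OF _ _ ev]) (use tp C0 in auto)
  then show ?thesis using s by blast
qed

end
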